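(* For every nonnegative integer $d$ and every $\tau\ge1$, $$\int_0^\infty\left(\int_\tau^x\frac{|H_d(t)|}{t}\,dt\right)\varphi(x)\,dx\le e^{-\tau^2/4}.$$
   Context: $\varphi(x)=\frac{1}{\sqrt{2\pi}}e^{-x^2/2}$ is the standard Gaussian density on $\mathbb{R}$. The Hermite polynomials $(H_k)_{k\ge0}$ are the orthonormal polynomials for $\mathcal{N}(0,1)$ with $\deg H_k=k$ and positive leading coefficient (the probabilist's Hermite polynomials divided by $\sqrt{k!}$). For $x<\tau$ the inner integral $\int_\tau^x$ is the usual oriented integral. *)

theory Defs
  imports "HOL-Probability.Probability"
begin

text \<open>Probabilist's Hermite polynomials He_n (monic), via the three-term recurrence
  He_0 = 1, He_1 = x, He_(n+2) = x He_(n+1) - (n+1) He_n.\<close>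
fun hermite_prob :: "nat \<Rightarrow> real \<Rightarrow> real" where
  "hermite_prob 0 x = 1"
| "hermite_prob (Suc 0) x = x"
| "hermite_prob (Suc (Suc n)) x = x * hermite_prob (Suc n) x - real (Suc n) * hermite_prob n x"

text \<open>Orthonormal Hermite polynomials for N(0,1): H_k = He_k / sqrt(k!).\<close>
definition hermite :: "nat \<Rightarrow> real \<Rightarrow> real" where
  "hermite k x = hermite_prob k x / sqrt (fact k)"

end

theory Submission
  imports Defs "HOL-Computational_Algebra.Polynomial" "HOL-Real_Asymp.Real_Asymp"
begin

fun hp :: "nat \<Rightarrow> real poly" where
  "hp 0 = 1"
| "hp (Suc 0) = [:0,1:]"
| "hp (Suc (Suc n)) = [:0,1:] * hp (Suc n) - smult (real (Suc n)) (hp n)"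

lemma poly_hp: "poly (hp n) x = hermite_prob n x"
  by (induction n rule: hp.induct) auto

lemma hp_rec: "hp (Suc n) = [:0,1:] * hp n - smult (real n) (hp (n - 1))"
  by (cases n) auto

lemma smult_Suc_aux: "smult (real (Suc m)) p = p + smult (real m) p"
  by (simp add: smult_add_left)

lemma pderiv_hp: "pderiv (hp n) = smult (real n) (hp (n - 1))"
proof (induction n rule: hp.induct)
  case 1 then show ?case by simp
next
  case 2 then show ?case by (simp add: pderiv_pCons)
next
  case (3 n)
  have "pderiv (hp (Suc (Suc n))) = hp (Suc n) + [:0,1:] * pderiv (hp (Suc n)) - smult (real (Suc n)) (pderiv (hp n))"
    by (simp add: pderiv_mult pderiv_diff pderiv_smult pderiv_pCons)
  also have "\<dots> = hp (Suc n) + smult (real (Suc n)) ([:0,1:] * hp n - smult (real n) (hp (n - 1)))"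
    by (simp only: 3 smult_diff_right mult_smult_right smult_smult diff_Suc_1 add_diff_eq)
  also have "\<dots> = smult (real (Suc (Suc n))) (hp (Suc n))"
    by (simp only: hp_rec[of n, symmetric] smult_Suc_aux[of "Suc n"])
  finally show ?case by simp
qed

definition M :: "nat \<Rightarrow> real" where "M k = (\<integral>x. std_normal_density x * x ^ k \<partial>lborel)"

lemma a1: "M (2 * Suc j) = fact (2 * Suc j) / (2^(Suc j) * fact (Suc j))"
    unfolding M_def using integral_std_normal_moment_even[of "Suc j"] by simp
lemma a2:  "(fact (2 * Suc j) :: real) = real (Suc (Suc (2*j))) * (real (Suc (2*j)) * fact (2 * j))"
proof -
  have e: "2 * Suc j = Suc (Suc (2*j))" by simp
  show ?thesis unfolding e by (rule fact_Suc[THEN trans]) (simp only: fact_Suc)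
qed
lemma a3: "(2::real)^(Suc j) * fact (Suc j) = 2 * real (Suc j) * (2^j * fact j)"
    by (simp add: fact_Suc)
lemma M1: "M 1 = 0"
  unfolding M_def using integral_std_normal_moment_odd[of 0] by simp
lemma M0: "M 0 = 1"
  unfolding M_def by simp
lemma a4: "M (2 * j) = fact (2 * j) / (2^j * fact j)"
    unfolding M_def using integral_std_normal_moment_even[of j] by simp

lemma M_even: "M (Suc (Suc (2 * j))) = real (Suc (2 * j)) * M (2 * j)"
proof -
  have e: "Suc (Suc (2 * j)) = 2 * Suc j" by simp
  have r: "real (Suc (Suc (2*j))) = 2 * real (Suc j)" by simp
  have pos: "2 * real (Suc j) \<noteq> 0" by simp
  have "M (Suc (Suc (2 * j))) = (2 * real (Suc j)) * (real (Suc (2*j)) * fact (2 * j)) / ((2 * real (Suc j)) * (2^j * fact j))"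
    unfolding e a1 a2 a3 r by (simp only: mult.assoc)
  also have "\<dots> = real (Suc (2*j)) * fact (2 * j) / (2^j * fact j)"
    using pos by (rule mult_divide_mult_cancel_left)
  also have "\<dots> = real (Suc (2 * j)) * M (2 * j)"
    unfolding a4 by simp
  finally show ?thesis .
qed

lemma M_odd: "M (Suc (Suc (2 * j + 1))) = 0" and M_odd': "M (2 * j + 1) = 0"
proof -
  show "M (2 * j + 1) = 0"
    unfolding M_def using integral_std_normal_moment_odd[of j] by simp
  have e: "Suc (Suc (2 * j + 1)) = 2 * Suc j + 1" by simp
  show "M (Suc (Suc (2 * j + 1))) = 0"
    unfolding e M_def using integral_std_normal_moment_odd[of "Suc j"] by simp
qed

lemma M_rec: "M (Suc (Suc k)) = real (Suc k) * M k"
proof (cases "even k")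
  case True
  then obtain j where k: "k = 2 * j" by auto
  show ?thesis unfolding k by (rule M_even)
next
  case False
  then obtain j where k: "k = 2 * j + 1" using oddE by blast
  show ?thesis unfolding k M_odd M_odd' by simp
qed


lemma M1': "M (Suc 0) = 0" using M1 by simp

lemma int_J: "integrable lborel (\<lambda>x. std_normal_density x * x ^ k * poly p x)"
proof (induction p arbitrary: k)
  case 0 then show ?case by simp
next
  case (pCons a p)
  have "integrable lborel (\<lambda>x. a * (std_normal_density x * x ^ k) + std_normal_density x * x ^ Suc k * poly p x)"
    using pCons(2)[of "Suc k"] integrable_std_normal_moment[of k] by auto
  then show ?case by (simp add: algebra_simps)
qed

definition J :: "nat \<Rightarrow> real poly \<Rightarrow> real" where
  "J k p = (\<integral>x. std_normal_density x * x ^ k * poly p x \<partial>lborel)"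

lemma J_0[simp]: "J k 0 = 0" by (simp add: J_def)

lemma J_pCons: "J k (pCons a s) = a * M k + J (Suc k) s"
proof -
  have i1: "integrable lborel (\<lambda>x. a * (std_normal_density x * x ^ k))"
    by (intro integrable_mult_right integrable_std_normal_moment)
  have i2: "integrable lborel (\<lambda>x. std_normal_density x * x ^ Suc k * poly s x)"
    by (rule int_J)
  have "J k (pCons a s) = (\<integral>x. a * (std_normal_density x * x ^ k) + std_normal_density x * x ^ Suc k * poly s x \<partial>lborel)"
    unfolding J_def by (rule Bochner_Integration.integral_cong) (auto simp: algebra_simps)
  also have "\<dots> = (\<integral>x. a * (std_normal_density x * x ^ k) \<partial>lborel) + J (Suc k) s"
    unfolding J_def by (rule Bochner_Integration.integral_add[OF i1 i2])
  also have "(\<integral>x. a * (std_normal_density x * x ^ k) \<partial>lborel) = a * M k"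
    unfolding M_def by (rule integral_mult_right_zero)
  finally show ?thesis .
qed

lemma J_add: "J k (p + q) = J k p + J k q"
proof -
  have "J k (p + q) = (\<integral>x. std_normal_density x * x ^ k * poly p x + std_normal_density x * x ^ k * poly q x \<partial>lborel)"
    unfolding J_def by (rule Bochner_Integration.integral_cong) (auto simp: algebra_simps)
  also have "\<dots> = J k p + J k q"
    unfolding J_def by (subst Bochner_Integration.integral_add) (auto intro!: int_J)
  finally show ?thesis .
qed

lemma J_smult: "J k (smult c p) = c * J k p"
proof -
  have "J k (smult c p) = (\<integral>x. c * (std_normal_density x * x ^ k * poly p x) \<partial>lborel)"
    unfolding J_def by (rule Bochner_Integration.integral_cong) (auto simp: algebra_simps)
  then show ?thesis unfolding J_def by simp
qed

lemma J_diff: "J k (p - q) = J k p - J k q"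
  using J_add[of k "p - q" q] by simp

lemma J_ibp: "J (Suc k) r = real k * J (k - 1) r + J k (pderiv r)"
proof (induction r arbitrary: k)
  case 0 then show ?case by simp
next
  case (pCons a s)
  have Mk: "a * M (Suc k) = real k * (a * M (k - 1))"
  proof (cases k)
    case 0 then show ?thesis using M1' by simp
  next
    case (Suc j) then show ?thesis using M_rec[of j] by simp
  qed
  have kk: "real k * J (k - 1) (pCons a s) = real k * (a * M (k - 1)) + real k * J k s"
  proof (cases k)
    case 0 then show ?thesis by simp
  next
    case (Suc j) then show ?thesis using J_pCons[of j a s] by (simp add: distrib_left)
  qed
  have e1: "J (Suc k) (pCons a s) = a * M (Suc k) + J (Suc (Suc k)) s" by (rule J_pCons)
  have e2: "J (Suc (Suc k)) s = real (Suc k) * J k s + J (Suc k) (pderiv s)"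
    using pCons(2)[of "Suc k"] by (simp only: diff_Suc_1)
  have e3: "J k (pderiv (pCons a s)) = J k s + J (Suc k) (pderiv s)"
  proof -
    have "J k (pderiv (pCons a s)) = J k s + J k (pCons 0 (pderiv s))"
      unfolding pderiv_pCons by (rule J_add)
    also have "J k (pCons 0 (pderiv s)) = 0 * M k + J (Suc k) (pderiv s)" by (rule J_pCons)
    finally show ?thesis by simp
  qed
  have e4: "real (Suc k) * J k s = real k * J k s + J k s" by (simp add: distrib_right)
  show ?case using e1 e2 e3 kk Mk e4 by linarith
qed

definition I :: "nat \<Rightarrow> nat \<Rightarrow> real" where "I m n = J 0 (hp m * hp n)"

lemma I_step: "I m (Suc n) = real m * I (m - 1) n"
proof -
  have "hp m * hp (Suc n) = pCons 0 (hp m * hp n) - smult (real n) (hp m * hp (n - 1))"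
    by (simp add: hp_rec right_diff_distrib)
  then have "I m (Suc n) = J 1 (hp m * hp n) - real n * I m (n - 1)"
    unfolding I_def by (simp add: J_diff J_smult J_pCons M0)
  also have "J 1 (hp m * hp n) = J 0 (pderiv (hp m * hp n))"
    using J_ibp[of 0] by simp
  also have "pderiv (hp m * hp n) = smult (real n) (hp m * hp (n - 1)) + smult (real m) (hp (m - 1) * hp n)"
    by (simp add: pderiv_mult pderiv_hp add.commute mult.commute)
  also have "J 0 (smult (real n) (hp m * hp (n - 1)) + smult (real m) (hp (m - 1) * hp n))
      = real n * I m (n - 1) + real m * I (m - 1) n"
    unfolding I_def by (simp only: J_add J_smult)
  finally show ?thesis by simp
qed

lemma I_diag: "I n n = fact n"
proof (induction n)
  case 0
  then show ?case by (simp add: I_def J_def M0[unfolded M_def])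
next
  case (Suc n)
  then show ?case using I_step[of "Suc n" n] by simp
qed

lemma hermite_sq_integral:
  "(\<integral>x. std_normal_density x * (hermite d x)\<^sup>2 \<partial>lborel) = 1"
  and hermite_sq_integrable:
  "integrable lborel (\<lambda>x. std_normal_density x * (hermite d x)\<^sup>2)"
proof -
  have eq: "std_normal_density x * (hermite d x)\<^sup>2 = (std_normal_density x * x ^ 0 * poly (hp d * hp d) x) / fact d" for x
    by (simp add: hermite_def poly_hp power2_eq_square field_simps)
  show "integrable lborel (\<lambda>x. std_normal_density x * (hermite d x)\<^sup>2)"
    unfolding eq by (intro integrable_divide_zero int_J)
  have "(\<integral>x. std_normal_density x * (hermite d x)\<^sup>2 \<partial>lborel) = I d d / fact d"
    unfolding eq I_def J_def by (rule integral_divide_zero)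
  then show "(\<integral>x. std_normal_density x * (hermite d x)\<^sup>2 \<partial>lborel) = 1"
    by (simp add: I_diag)
qed

lemma hermite_cont: "continuous_on S (hermite d)"
proof -
  have "hermite d = (\<lambda>x. poly (hp d) x / sqrt (fact d))"
    by (auto simp: hermite_def poly_hp fun_eq_iff)
  then show ?thesis by (auto intro!: continuous_intros)
qed

lemma hermite_meas[measurable]: "hermite d \<in> borel_measurable borel"
  by (rule borel_measurable_continuous_onI[OF hermite_cont])

lemma snd_deriv: "((\<lambda>x. - std_normal_density x) has_real_derivative (y * std_normal_density y)) (at y)"
  unfolding std_normal_density_def
  by (auto intro!: derivative_eq_intros simp: field_simps power2_eq_square)

lemma snd_lim: "((\<lambda>x. - std_normal_density x) \<longlongrightarrow> 0) at_top"
  unfolding std_normal_density_def by real_asymp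

lemma snd_le1: "std_normal_density x \<le> 1"
proof -
  have "exp (- x\<^sup>2 / 2) \<le> 1" by simp
  moreover have "1 \<le> sqrt (2 * pi)" using pi_gt3 by simp
  ultimately have "exp (- x\<^sup>2 / 2) \<le> sqrt (2 * pi)" by linarith
  then show ?thesis unfolding std_normal_density_def
    by (simp add: field_simps)
qed

lemma tail_x_phi:
  assumes "0 \<le> a"
  shows "(\<integral>\<^sup>+x. ennreal (x * std_normal_density x) * indicator {a..} x \<partial>lborel) = ennreal (std_normal_density a)"
proof -
  have "(\<integral>\<^sup>+x. ennreal (x * std_normal_density x) * indicator {a..} x \<partial>lborel) = ennreal (0 - (- std_normal_density a))"
    by (rule nn_integral_FTC_atLeast[OF _ snd_deriv _ snd_lim]) (use assms in auto)
  then show ?thesis by simp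
qed

lemma mills:
  assumes "0 < t"
  shows "(\<integral>\<^sup>+x. ennreal (std_normal_density x) * indicator {t<..} x \<partial>lborel) \<le> ennreal (std_normal_density t / t)"
proof -
  have "(\<integral>\<^sup>+x. ennreal (std_normal_density x) * indicator {t<..} x \<partial>lborel)
     \<le> (\<integral>\<^sup>+x. ennreal (1 / t) * (ennreal (x * std_normal_density x) * indicator {t..} x) \<partial>lborel)"
  proof (rule nn_integral_mono)
    fix x :: real
    show "ennreal (std_normal_density x) * indicator {t<..} x \<le> ennreal (1 / t) * (ennreal (x * std_normal_density x) * indicator {t..} x)"
    proof (cases "t < x")
      case True
      have "std_normal_density x \<le> 1 / t * (x * std_normal_density x)"
        using True assms by (simp add: field_simps mult_right_mono)
      then show ?thesis using True assms
        by (simp add: ennreal_mult[symmetric] ennreal_leI)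
    qed simp
  qed
  also have "\<dots> = ennreal (1 / t) * ennreal (std_normal_density t)"
    by (subst nn_integral_cmult) (use tail_x_phi[of t] assms in auto)
  also have "\<dots> = ennreal (std_normal_density t / t)"
    using assms by (simp add: ennreal_mult[symmetric])
  finally show ?thesis .
qed

lemma meas2: "(\<lambda>(x, t). ennreal (std_normal_density x) * indicator {\<tau><..} x * (ennreal (\<bar>hermite d t\<bar> / t) * indicator {\<tau><..<x} t))
   \<in> borel_measurable (lborel \<Otimes>\<^sub>M lborel)"
  unfolding indicator_def greaterThanLessThan_iff greaterThan_iff by measurable

lemma hermite_nn: "(\<integral>\<^sup>+x. ennreal (std_normal_density x * (hermite d x)\<^sup>2) \<partial>lborel) = 1"
  using nn_integral_eq_integral[OF hermite_sq_integrable[of d]] hermite_sq_integral[of d] by simp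

lemma amgm:
  fixes h p t l :: real
  assumes "0 \<le> p" "1 \<le> t" "0 < l"
  shows "\<bar>h\<bar> / t * (p / t) \<le> l / 2 * (p * h\<^sup>2) + 1 / (2 * l) * (t * p)"
proof -
  have "\<bar>h\<bar> / t * (p / t) \<le> l / 2 * (p * h\<^sup>2) + 1 / (2 * l) * (p / t^4)"
  proof -
    have "0 \<le> p / (2 * l) * (l * \<bar>h\<bar> - 1 / t\<^sup>2)\<^sup>2" using assms by simp
    also have "\<dots> = l / 2 * (p * h\<^sup>2) + 1 / (2 * l) * (p / t^4) - \<bar>h\<bar> / t * (p / t)"
      using assms by (simp add: field_simps power2_eq_square eval_nat_numeral)
    finally show ?thesis by simp
  qed
  also have "p / t^4 \<le> t * p"
  proof -
    have "1 \<le> t^4" using assms by simp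
    then have "p / t^4 \<le> p" using assms by (simp add: divide_le_eq mult_le_cancel_left1 mult_left_mono)
    also have "p \<le> t * p" using assms mult_right_mono[of 1 t p] by simp
    finally show ?thesis .
  qed
  then have "1 / (2 * l) * (p / t^4) \<le> 1 / (2 * l) * (t * p)" using assms by (intro mult_left_mono) auto
  finally show ?thesis by simp
qed

lemma final_real:
  fixes \<tau> :: real
  defines "l \<equiv> exp (- \<tau>\<^sup>2 / 4)"
  shows "l / 2 + 1 / (2 * l) * std_normal_density \<tau> \<le> l"
proof -
  have l0: "0 < l" unfolding l_def by simp
  have e: "exp (- \<tau>\<^sup>2 / 2) = l * l" unfolding l_def by (simp flip: exp_add)
  have s: "1 \<le> sqrt (2 * pi)" using pi_gt3 by simp
  have "1 / (2 * l) * std_normal_density \<tau> = l / (2 * sqrt (2 * pi))"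
    unfolding std_normal_density_def e using l0 by (simp add: field_simps)
  also have "\<dots> \<le> l / 2" using s l0 by (intro divide_left_mono) auto
  finally show ?thesis by simp
qed

lemma B1:
  assumes tau: "1 \<le> \<tau>"
  shows "(\<integral>\<^sup>+x. ennreal (std_normal_density x) * indicator {\<tau><..} x *
            (\<integral>\<^sup>+t. ennreal (\<bar>hermite d t\<bar> / t) * indicator {\<tau><..<x} t \<partial>lborel) \<partial>lborel)
         \<le> ennreal (exp (- \<tau>\<^sup>2 / 4))"
proof -
  define l where "l = exp (- \<tau>\<^sup>2 / 4)"
  have l0: "0 < l" unfolding l_def by simp
  let ?f = "\<lambda>x t. ennreal (std_normal_density x) * indicator {\<tau><..} x * (ennreal (\<bar>hermite d t\<bar> / t) * indicator {\<tau><..<x} t)"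
  have m: "case_prod ?f \<in> borel_measurable (lborel \<Otimes>\<^sub>M lborel)" by (rule meas2)
  have "(\<integral>\<^sup>+x. ennreal (std_normal_density x) * indicator {\<tau><..} x *
            (\<integral>\<^sup>+t. ennreal (\<bar>hermite d t\<bar> / t) * indicator {\<tau><..<x} t \<partial>lborel) \<partial>lborel)
      = (\<integral>\<^sup>+x. (\<integral>\<^sup>+t. ?f x t \<partial>lborel) \<partial>lborel)"
    by (rule nn_integral_cong, subst nn_integral_cmult) auto
  also have "\<dots> = (\<integral>\<^sup>+t. (\<integral>\<^sup>+x. ?f x t \<partial>lborel) \<partial>lborel)"
    by (rule lborel_pair.Fubini'[OF m, symmetric])
  also have "\<dots> = (\<integral>\<^sup>+t. ennreal (\<bar>hermite d t\<bar> / t) * indicator {\<tau><..} t *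
                        (\<integral>\<^sup>+x. ennreal (std_normal_density x) * indicator {t<..} x \<partial>lborel) \<partial>lborel)"
  proof (rule nn_integral_cong)
    fix t :: real
    have "(\<integral>\<^sup>+x. ?f x t \<partial>lborel) = (\<integral>\<^sup>+x. ennreal (\<bar>hermite d t\<bar> / t) * indicator {\<tau><..} t *
                        (ennreal (std_normal_density x) * indicator {t<..} x) \<partial>lborel)"
      by (rule nn_integral_cong) (auto simp: indicator_def mult.commute)
    also have "\<dots> = ennreal (\<bar>hermite d t\<bar> / t) * indicator {\<tau><..} t *
                        (\<integral>\<^sup>+x. ennreal (std_normal_density x) * indicator {t<..} x \<partial>lborel)"
      by (rule nn_integral_cmult) auto
    finally show "(\<integral>\<^sup>+x. ?f x t \<partial>lborel) = \<dots>" .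
  qed
  also have "\<dots> \<le> (\<integral>\<^sup>+t. ennreal (\<bar>hermite d t\<bar> / t) * indicator {\<tau><..} t * ennreal (std_normal_density t / t) \<partial>lborel)"
  proof (rule nn_integral_mono)
    fix t :: real
    show "ennreal (\<bar>hermite d t\<bar> / t) * indicator {\<tau><..} t *
                        (\<integral>\<^sup>+x. ennreal (std_normal_density x) * indicator {t<..} x \<partial>lborel)
          \<le> ennreal (\<bar>hermite d t\<bar> / t) * indicator {\<tau><..} t * ennreal (std_normal_density t / t)"
    proof (cases "\<tau> < t")
      case True
      then have "0 < t" using tau by simp
      then show ?thesis using mills[of t] by (intro mult_left_mono) auto
    qed simp
  qed
  also have "\<dots> \<le> (\<integral>\<^sup>+t. ennreal (l / 2 * (std_normal_density t * (hermite d t)\<^sup>2)) +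
                       ennreal (1 / (2 * l)) * (ennreal (t * std_normal_density t) * indicator {\<tau>..} t) \<partial>lborel)"
  proof (rule nn_integral_mono)
    fix t :: real
    show "ennreal (\<bar>hermite d t\<bar> / t) * indicator {\<tau><..} t * ennreal (std_normal_density t / t)
       \<le> ennreal (l / 2 * (std_normal_density t * (hermite d t)\<^sup>2)) +
                       ennreal (1 / (2 * l)) * (ennreal (t * std_normal_density t) * indicator {\<tau>..} t)"
    proof (cases "\<tau> < t")
      case True
      then have t1: "1 \<le> t" "0 < t" using tau by auto
      have a: "\<bar>hermite d t\<bar> / t * (std_normal_density t / t) \<le> l / 2 * (std_normal_density t * (hermite d t)\<^sup>2) + 1 / (2 * l) * (t * std_normal_density t)"
        by (rule amgm) (use t1 l0 in auto)
      have "ennreal (\<bar>hermite d t\<bar> / t) * indicator {\<tau><..} t * ennreal (std_normal_density t / t)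
          = ennreal (\<bar>hermite d t\<bar> / t * (std_normal_density t / t))"
      proof -
        have "ennreal (\<bar>hermite d t\<bar> / t * (std_normal_density t / t)) = ennreal (\<bar>hermite d t\<bar> / t) * ennreal (std_normal_density t / t)"
          by (rule ennreal_mult) (use t1 in auto)
        then show ?thesis using True by simp
      qed
      also have "\<dots> \<le> ennreal (l / 2 * (std_normal_density t * (hermite d t)\<^sup>2) + 1 / (2 * l) * (t * std_normal_density t))"
        by (rule ennreal_leI[OF a])
      also have "\<dots> = ennreal (l / 2 * (std_normal_density t * (hermite d t)\<^sup>2)) +
                       ennreal (1 / (2 * l)) * (ennreal (t * std_normal_density t) * indicator {\<tau>..} t)"
      proof -
        have p: "ennreal (l / 2 * (std_normal_density t * (hermite d t)\<^sup>2) + 1 / (2 * l) * (t * std_normal_density t))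
           = ennreal (l / 2 * (std_normal_density t * (hermite d t)\<^sup>2)) + ennreal (1 / (2 * l) * (t * std_normal_density t))"
          by (rule ennreal_plus) (use t1 l0 in auto)
        have q: "ennreal (1 / (2 * l) * (t * std_normal_density t)) = ennreal (1 / (2 * l)) * ennreal (t * std_normal_density t)"
          by (rule ennreal_mult) (use t1 l0 in auto)
        show ?thesis unfolding p q using True by simp
      qed
      finally show ?thesis .
    qed simp
  qed
  also have "\<dots> = ennreal (l / 2) * 1 + ennreal (1 / (2 * l)) * ennreal (std_normal_density \<tau>)"
  proof -
    have "(\<integral>\<^sup>+t. ennreal (l / 2 * (std_normal_density t * (hermite d t)\<^sup>2)) \<partial>lborel)
        = (\<integral>\<^sup>+t. ennreal (l / 2) * ennreal (std_normal_density t * (hermite d t)\<^sup>2) \<partial>lborel)"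
      by (intro nn_integral_cong ennreal_mult) (use l0 in auto)
    also have "\<dots> = ennreal (l / 2) * 1"
      by (subst nn_integral_cmult) (auto simp: hermite_nn)
    finally have i1: "(\<integral>\<^sup>+t. ennreal (l / 2 * (std_normal_density t * (hermite d t)\<^sup>2)) \<partial>lborel) = ennreal (l / 2) * 1" .
    have i2: "(\<integral>\<^sup>+t. ennreal (1 / (2 * l)) * (ennreal (t * std_normal_density t) * indicator {\<tau>..} t) \<partial>lborel)
       = ennreal (1 / (2 * l)) * ennreal (std_normal_density \<tau>)"
      by (subst nn_integral_cmult) (use tail_x_phi[of \<tau>] tau in auto)
    have "(\<integral>\<^sup>+t. ennreal (l / 2 * (std_normal_density t * (hermite d t)\<^sup>2)) +
                       ennreal (1 / (2 * l)) * (ennreal (t * std_normal_density t) * indicator {\<tau>..} t) \<partial>lborel)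
       = (\<integral>\<^sup>+t. ennreal (l / 2 * (std_normal_density t * (hermite d t)\<^sup>2)) \<partial>lborel) +
         (\<integral>\<^sup>+t. ennreal (1 / (2 * l)) * (ennreal (t * std_normal_density t) * indicator {\<tau>..} t) \<partial>lborel)"
      by (rule nn_integral_add; measurable)
    then show ?thesis unfolding i1 i2 .
  qed
  also have "\<dots> = ennreal (l / 2 + 1 / (2 * l) * std_normal_density \<tau>)"
  proof -
    have q: "ennreal (1 / (2 * l) * std_normal_density \<tau>) = ennreal (1 / (2 * l)) * ennreal (std_normal_density \<tau>)"
      by (rule ennreal_mult) (use l0 in auto)
    have p: "ennreal (l / 2 + 1 / (2 * l) * std_normal_density \<tau>) = ennreal (l / 2) + ennreal (1 / (2 * l) * std_normal_density \<tau>)"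
      by (rule ennreal_plus) (use l0 in auto)
    show ?thesis unfolding p q by simp
  qed
  also have "\<dots> \<le> ennreal l"
    using final_real[of \<tau>] unfolding l_def by (intro ennreal_leI) simp
  finally show ?thesis unfolding l_def .
qed

lemma meas3: "(\<lambda>(x, t). ennreal (std_normal_density x) * indicator {0<..\<tau>} x * (ennreal (\<bar>hermite d t\<bar> / t) * indicator {x<..<\<tau>} t))
   \<in> borel_measurable (lborel \<Otimes>\<^sub>M lborel)"
  unfolding indicator_def greaterThanLessThan_iff greaterThanAtMost_iff by measurable

lemma B2:
  assumes tau: "0 < \<tau>"
  shows "(\<integral>\<^sup>+x. ennreal (std_normal_density x) * indicator {0<..\<tau>} x *
            (\<integral>\<^sup>+t. ennreal (\<bar>hermite d t\<bar> / t) * indicator {x<..<\<tau>} t \<partial>lborel) \<partial>lborel) < \<infinity>"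
proof -
  let ?f = "\<lambda>x t. ennreal (std_normal_density x) * indicator {0<..\<tau>} x * (ennreal (\<bar>hermite d t\<bar> / t) * indicator {x<..<\<tau>} t)"
  have m: "case_prod ?f \<in> borel_measurable (lborel \<Otimes>\<^sub>M lborel)" by (rule meas3)
  have "(\<integral>\<^sup>+x. ennreal (std_normal_density x) * indicator {0<..\<tau>} x *
            (\<integral>\<^sup>+t. ennreal (\<bar>hermite d t\<bar> / t) * indicator {x<..<\<tau>} t \<partial>lborel) \<partial>lborel)
      = (\<integral>\<^sup>+x. (\<integral>\<^sup>+t. ?f x t \<partial>lborel) \<partial>lborel)"
    by (rule nn_integral_cong, subst nn_integral_cmult) auto
  also have "\<dots> = (\<integral>\<^sup>+t. (\<integral>\<^sup>+x. ?f x t \<partial>lborel) \<partial>lborel)"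
    by (rule lborel_pair.Fubini'[OF m, symmetric])
  also have "\<dots> = (\<integral>\<^sup>+t. ennreal (\<bar>hermite d t\<bar> / t) * indicator {0<..<\<tau>} t *
                        (\<integral>\<^sup>+x. ennreal (std_normal_density x) * indicator {0<..<t} x \<partial>lborel) \<partial>lborel)"
  proof (rule nn_integral_cong)
    fix t :: real
    have "(\<integral>\<^sup>+x. ?f x t \<partial>lborel) = (\<integral>\<^sup>+x. ennreal (\<bar>hermite d t\<bar> / t) * indicator {0<..<\<tau>} t *
                        (ennreal (std_normal_density x) * indicator {0<..<t} x) \<partial>lborel)"
      by (rule nn_integral_cong) (auto simp: indicator_def mult.commute)
    also have "\<dots> = ennreal (\<bar>hermite d t\<bar> / t) * indicator {0<..<\<tau>} t *
                        (\<integral>\<^sup>+x. ennreal (std_normal_density x) * indicator {0<..<t} x \<partial>lborel)"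
      by (rule nn_integral_cmult) auto
    finally show "(\<integral>\<^sup>+x. ?f x t \<partial>lborel) = \<dots>" .
  qed
  also have "\<dots> \<le> (\<integral>\<^sup>+t. ennreal (indicator {0..\<tau>} t * \<bar>hermite d t\<bar>) \<partial>lborel)"
  proof (rule nn_integral_mono)
    fix t :: real
    show "ennreal (\<bar>hermite d t\<bar> / t) * indicator {0<..<\<tau>} t *
                        (\<integral>\<^sup>+x. ennreal (std_normal_density x) * indicator {0<..<t} x \<partial>lborel)
          \<le> ennreal (indicator {0..\<tau>} t * \<bar>hermite d t\<bar>)"
    proof (cases "0 < t \<and> t < \<tau>")
      case True
      have "(\<integral>\<^sup>+x. ennreal (std_normal_density x) * indicator {0<..<t} x \<partial>lborel)
           \<le> (\<integral>\<^sup>+x. indicator {0<..<t} x \<partial>lborel)"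
        by (rule nn_integral_mono) (auto simp: indicator_def snd_le1)
      also have "\<dots> = ennreal t" using True by simp
      finally have le: "(\<integral>\<^sup>+x. ennreal (std_normal_density x) * indicator {0<..<t} x \<partial>lborel) \<le> ennreal t" .
      have "ennreal (\<bar>hermite d t\<bar> / t) * indicator {0<..<\<tau>} t *
                        (\<integral>\<^sup>+x. ennreal (std_normal_density x) * indicator {0<..<t} x \<partial>lborel)
            \<le> ennreal (\<bar>hermite d t\<bar> / t) * ennreal t"
        using True le by (simp add: mult_left_mono)
      also have "\<dots> = ennreal (\<bar>hermite d t\<bar> / t * t)"
        by (rule ennreal_mult[symmetric]) (use True in auto)
      also have "\<dots> = ennreal (indicator {0..\<tau>} t * \<bar>hermite d t\<bar>)"
        using True by simp
      finally show ?thesis .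
    qed auto
  qed
  also have "\<dots> < \<infinity>"
  proof -
    have "integrable lborel (\<lambda>x. indicator {0..\<tau>} x *\<^sub>R \<bar>hermite d x\<bar>)"
      by (rule borel_integrable_compact) (auto intro!: continuous_intros hermite_cont)
    then have "(\<integral>\<^sup>+x. ennreal (norm (indicator {0..\<tau>} x *\<^sub>R \<bar>hermite d x\<bar>)) \<partial>lborel) < \<infinity>"
      by (simp add: integrable_iff_bounded)
    moreover have "\<And>x. norm (indicator {0..\<tau>} x *\<^sub>R \<bar>hermite d x\<bar>) = indicator {0..\<tau>} x * \<bar>hermite d x\<bar>"
      by (simp add: indicator_def)
    ultimately show ?thesis by simp
  qed
  finally show ?thesis .
qed

lemma F_ge:
  assumes "0 < \<tau>" "\<tau> \<le> x"
  shows "(LBINT t=ereal \<tau>..ereal x. \<bar>hermite d t\<bar> / t)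
       = enn2real (\<integral>\<^sup>+t. ennreal (\<bar>hermite d t\<bar> / t) * indicator {\<tau><..<x} t \<partial>lborel)"
proof -
  have "(LBINT t=ereal \<tau>..ereal x. \<bar>hermite d t\<bar> / t) = (\<integral>t. indicator {\<tau><..<x} t *\<^sub>R (\<bar>hermite d t\<bar> / t) \<partial>lborel)"
    using assms by (simp add: interval_lebesgue_integral_def set_lebesgue_integral_def)
  also have "\<dots> = enn2real (\<integral>\<^sup>+t. ennreal (indicator {\<tau><..<x} t *\<^sub>R (\<bar>hermite d t\<bar> / t)) \<partial>lborel)"
    by (rule integral_eq_nn_integral) (use assms in \<open>auto simp: indicator_def\<close>)
  also have "(\<integral>\<^sup>+t. ennreal (indicator {\<tau><..<x} t *\<^sub>R (\<bar>hermite d t\<bar> / t)) \<partial>lborel)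
      = (\<integral>\<^sup>+t. ennreal (\<bar>hermite d t\<bar> / t) * indicator {\<tau><..<x} t \<partial>lborel)"
    by (rule nn_integral_cong) (auto simp: indicator_def)
  finally show ?thesis .
qed

lemma F_lt:
  assumes "0 < x" "x < \<tau>"
  shows "(LBINT t=ereal \<tau>..ereal x. \<bar>hermite d t\<bar> / t)
       = - enn2real (\<integral>\<^sup>+t. ennreal (\<bar>hermite d t\<bar> / t) * indicator {x<..<\<tau>} t \<partial>lborel)"
proof -
  have "(LBINT t=ereal \<tau>..ereal x. \<bar>hermite d t\<bar> / t) = - (\<integral>t. indicator {x<..<\<tau>} t *\<^sub>R (\<bar>hermite d t\<bar> / t) \<partial>lborel)"
    using assms by (simp add: interval_lebesgue_integral_def set_lebesgue_integral_def)
  also have "(\<integral>t. indicator {x<..<\<tau>} t *\<^sub>R (\<bar>hermite d t\<bar> / t) \<partial>lborel) = enn2real (\<integral>\<^sup>+t. ennreal (indicator {x<..<\<tau>} t *\<^sub>R (\<bar>hermite d t\<bar> / t)) \<partial>lborel)"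
    by (rule integral_eq_nn_integral) (use assms in \<open>auto simp: indicator_def\<close>)
  also have "(\<integral>\<^sup>+t. ennreal (indicator {x<..<\<tau>} t *\<^sub>R (\<bar>hermite d t\<bar> / t)) \<partial>lborel)
      = (\<integral>\<^sup>+t. ennreal (\<bar>hermite d t\<bar> / t) * indicator {x<..<\<tau>} t \<partial>lborel)"
    by (rule nn_integral_cong) (auto simp: indicator_def)
  finally show ?thesis .
qed

lemma ennreal_enn2real_le': "ennreal (enn2real r) \<le> r"
  by (simp add: ennreal_enn2real_if)

theorem lemmaA11:
  fixes d :: nat and \<tau> :: real
  assumes "\<tau> \<ge> 1"
  shows "interval_lebesgue_integrable lborel (ereal 0) PInfty
           (\<lambda>x. (LBINT t=ereal \<tau>..ereal x. \<bar>hermite d t\<bar> / t) * std_normal_density x)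
       \<and> (LBINT x=ereal 0..PInfty. (LBINT t=ereal \<tau>..ereal x. \<bar>hermite d t\<bar> / t) * std_normal_density x)
           \<le> exp (- (\<tau>\<^sup>2) / 4)"
proof -
  have tau0: "0 < \<tau>" using assms by simp
  define N where "N x = (\<integral>\<^sup>+t. ennreal (\<bar>hermite d t\<bar> / t) * indicator {\<tau><..<x} t \<partial>lborel)" for x
  define N' where "N' x = (\<integral>\<^sup>+t. ennreal (\<bar>hermite d t\<bar> / t) * indicator {x<..<\<tau>} t \<partial>lborel)" for x
  define F where "F x = (LBINT t=ereal \<tau>..ereal x. \<bar>hermite d t\<bar> / t)" for x
  define h where "h x = indicator {0<..} x *\<^sub>R (F x * std_normal_density x)" for x
  define h' where "h' x = indicator {0<..} x * std_normal_density x * (if \<tau> \<le> x then enn2real (N x) else - enn2real (N' x))" for x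
  have hh': "h x = h' x" for x
  proof (cases "0 < x")
    case True
    show ?thesis
    proof (cases "\<tau> \<le> x")
      case True
      then show ?thesis using \<open>0 < x\<close> F_ge[OF tau0 True, of d]
        unfolding h_def h'_def F_def N_def by simp
    next
      case False
      then show ?thesis using \<open>0 < x\<close> F_lt[OF \<open>0 < x\<close>, of \<tau> d]
        unfolding h_def h'_def F_def N'_def by simp
    qed
  qed (simp add: h_def h'_def)
  have N_meas: "N \<in> borel_measurable borel"
    unfolding N_def indicator_def greaterThanLessThan_iff by measurable
  have N'_meas: "N' \<in> borel_measurable borel"
    unfolding N'_def indicator_def greaterThanLessThan_iff by measurable
  have h_meas: "h \<in> borel_measurable lborel"
  proof -
    have "h' \<in> borel_measurable borel"
      unfolding h'_def using N_meas N'_meas by measurable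
    moreover have "h = h'" by (rule ext) (rule hh')
    ultimately show ?thesis by simp
  qed
  have Nt: "N \<tau> = 0" unfolding N_def by simp
  have bound_norm: "ennreal (norm (h x)) \<le> ennreal (std_normal_density x) * indicator {\<tau><..} x * N x
                      + ennreal (std_normal_density x) * indicator {0<..\<tau>} x * N' x" for x
  proof -
    consider "x \<le> 0" | "0 < x" "x = \<tau>" | "\<tau> < x" | "0 < x" "x < \<tau>" by linarith
    then show ?thesis
    proof cases
      case 1 then show ?thesis unfolding hh' h'_def by simp
    next
      case 2 then show ?thesis unfolding hh' h'_def by (simp add: Nt)
    next
      case 3
      then have "ennreal (norm (h x)) = ennreal (std_normal_density x) * ennreal (enn2real (N x))"
        unfolding hh' h'_def using tau0 by (simp add: ennreal_mult abs_mult)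
      also have "\<dots> \<le> ennreal (std_normal_density x) * N x"
        by (intro mult_left_mono ennreal_enn2real_le') auto
      finally show ?thesis using 3 by (simp add: add_increasing2)
    next
      case 4
      then have "ennreal (norm (h x)) = ennreal (std_normal_density x) * ennreal (enn2real (N' x))"
        unfolding hh' h'_def by (simp add: ennreal_mult abs_mult)
      also have "\<dots> \<le> ennreal (std_normal_density x) * N' x"
        by (intro mult_left_mono ennreal_enn2real_le') auto
      finally show ?thesis using 4 by (simp add: add_increasing)
    qed
  qed
  have B1': "(\<integral>\<^sup>+x. ennreal (std_normal_density x) * indicator {\<tau><..} x * N x \<partial>lborel) \<le> ennreal (exp (- \<tau>\<^sup>2 / 4))"
    unfolding N_def by (rule B1[OF assms])
  have B2': "(\<integral>\<^sup>+x. ennreal (std_normal_density x) * indicator {0<..\<tau>} x * N' x \<partial>lborel) < \<infinity>"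
    unfolding N'_def by (rule B2[OF tau0])
  have int_h: "integrable lborel h"
  proof -
    have "(\<integral>\<^sup>+x. ennreal (norm (h x)) \<partial>lborel)
        \<le> (\<integral>\<^sup>+x. ennreal (std_normal_density x) * indicator {\<tau><..} x * N x
                      + ennreal (std_normal_density x) * indicator {0<..\<tau>} x * N' x \<partial>lborel)"
      by (rule nn_integral_mono) (rule bound_norm)
    also have "\<dots> = (\<integral>\<^sup>+x. ennreal (std_normal_density x) * indicator {\<tau><..} x * N x \<partial>lborel)
                    + (\<integral>\<^sup>+x. ennreal (std_normal_density x) * indicator {0<..\<tau>} x * N' x \<partial>lborel)"
      by (rule nn_integral_add) (use N_meas N'_meas in measurable)
    also have "\<dots> < \<infinity>"
      using B1' B2' by (simp add: order_le_less_trans[OF _ ennreal_less_top])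
    finally show ?thesis using h_meas by (simp add: integrable_iff_bounded)
  qed
  have val: "integral\<^sup>L lborel h \<le> exp (- \<tau>\<^sup>2 / 4)"
  proof (rule integral_real_bounded)
    show "(\<integral>\<^sup>+x. ennreal (h x) \<partial>lborel) \<le> ennreal (exp (- \<tau>\<^sup>2 / 4))"
    proof -
      have "(\<integral>\<^sup>+x. ennreal (h x) \<partial>lborel) \<le> (\<integral>\<^sup>+x. ennreal (std_normal_density x) * indicator {\<tau><..} x * N x \<partial>lborel)"
      proof (rule nn_integral_mono)
        fix x :: real
        show "ennreal (h x) \<le> ennreal (std_normal_density x) * indicator {\<tau><..} x * N x"
        proof (cases "\<tau> < x")
          case True
          then have "ennreal (h x) = ennreal (std_normal_density x) * ennreal (enn2real (N x))"
            unfolding hh' h'_def using tau0 by (simp add: ennreal_mult)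
          also have "\<dots> \<le> ennreal (std_normal_density x) * N x"
            by (intro mult_left_mono ennreal_enn2real_le') auto
          finally show ?thesis using True by simp
        next
          case False
          have "h x \<le> 0"
          proof (cases "0 < x \<and> x < \<tau>")
            case True then show ?thesis unfolding hh' h'_def by simp
          next
            case False then show ?thesis using \<open>\<not> \<tau> < x\<close> unfolding hh' h'_def by (cases "x = \<tau>") (auto simp: Nt)
          qed
          then show ?thesis by (simp add: ennreal_neg)
        qed
      qed
      then show ?thesis using B1' by (rule order_trans)
    qed
  qed simp
  have e1: "interval_lebesgue_integrable lborel (ereal 0) PInfty
           (\<lambda>x. (LBINT t=ereal \<tau>..ereal x. \<bar>hermite d t\<bar> / t) * std_normal_density x) = integrable lborel h"
    unfolding interval_lebesgue_integrable_def set_integrable_def h_def F_def by simp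
  have e2: "(LBINT x=ereal 0..PInfty. (LBINT t=ereal \<tau>..ereal x. \<bar>hermite d t\<bar> / t) * std_normal_density x)
        = integral\<^sup>L lborel h"
    unfolding interval_lebesgue_integral_def set_lebesgue_integral_def h_def F_def by simp
  show ?thesis unfolding e1 e2 using int_h val by simp
qed

end
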